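(* Let $0< c\le 3$ and let $F$ be the distribution on $\{0,1\}$ with $\mathbb{P}(1)=c/3$. Then $BRev(F^3)/SRev(F^3) > 0.6$.
   Context: For i.i.d. values $X_1,\dots,X_k\sim F$ of an additive buyer: $SRev(F^k) = k\cdot\sup_{p\ge0} p\,\mathbb{P}(X_1\ge p)$ is the maximal revenue from selling each item separately at posted prices, and $BRev(F^k) = \sup_{p\ge 0} p\,\mathbb{P}(X_1+\dots+X_k\ge p)$ is the maximal revenue from selling all items as one bundle at a posted price. Here $k=3$. *)

theory Defs
  imports "HOL-Probability.Probability"
begin

definition SRev :: "nat \<Rightarrow> real pmf \<Rightarrow> real" where
  "SRev k F = real k * (SUP p\<in>{0..}. p * measure_pmf.prob F {x. x \<ge> p})"

definition sum_iid :: "nat \<Rightarrow> real pmf \<Rightarrow> real pmf" where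
  "sum_iid k F = map_pmf (\<lambda>f. \<Sum>i<k. f i) (Pi_pmf {..<k} 0 (\<lambda>_. F))"

definition BRev :: "nat \<Rightarrow> real pmf \<Rightarrow> real" where
  "BRev k F = (SUP p\<in>{0..}. p * measure_pmf.prob (sum_iid k F) {s. s \<ge> p})"

definition bern01 :: "real \<Rightarrow> real pmf" where
  "bern01 q = map_pmf (\<lambda>b. if b then 1 else 0) (bernoulli_pmf q)"

end

theory Submission imports Defs begin

lemma sum_iid_Suc:
  "sum_iid (Suc k) F = map_pmf (\<lambda>(y,s). y + s) (pair_pmf F (sum_iid k F))"
proof -
  have "sum_iid (Suc k) F = map_pmf (\<lambda>f. \<Sum>i<Suc k. f i)
     (map_pmf (\<lambda>(y,f). f(k:=y)) (pair_pmf F (Pi_pmf {..<k} 0 (\<lambda>_. F))))"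
    unfolding sum_iid_def lessThan_Suc by (subst Pi_pmf_insert) auto
  also have "\<dots> = map_pmf (\<lambda>(y,s). y + s) (pair_pmf F (sum_iid k F))"
    unfolding sum_iid_def pair_map_pmf2 map_pmf_comp
    by (intro map_pmf_cong refl) (auto simp: sum.lessThan_Suc)
  finally show ?thesis .
qed

lemma sum_iid_0: "sum_iid 0 F = return_pmf 0"
  unfolding sum_iid_def by simp

lemma sum_iid_bern:
  assumes "0 \<le> q" "q \<le> 1"
  shows "sum_iid k (bern01 q) = map_pmf real (binomial_pmf k q)"
proof (induction k)
  case 0 then show ?case using assms by (simp add: sum_iid_0 binomial_pmf_0)
next
  case (Suc k)
  have q: "q \<in> {0..1}" using assms by simp
  show ?case
    unfolding sum_iid_Suc Suc binomial_pmf_Suc[OF q]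
    apply (simp add: bern01_def map_pmf_def pair_pmf_def bind_assoc_pmf bind_return_pmf)
    by (intro bind_pmf_cong refl) auto
qed
lemma binom_prob:
  assumes "0 \<le> q" "q \<le> 1"
  shows "measure_pmf.prob (binomial_pmf n q) A = (\<Sum>k\<in>A\<inter>{..n}. pmf (binomial_pmf n q) k)"
proof -
  have sub: "set_pmf (binomial_pmf n q) \<subseteq> {..n}"
    using assms by (auto simp: set_pmf_binomial_eq split: if_splits)
  have "measure_pmf.prob (binomial_pmf n q) A
      = measure_pmf.prob (binomial_pmf n q) (A \<inter> set_pmf (binomial_pmf n q))"
    by (simp add: measure_Int_set_pmf)
  also have "A \<inter> set_pmf (binomial_pmf n q) = (A \<inter> {..n}) \<inter> set_pmf (binomial_pmf n q)"
    using sub by auto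
  also have "measure_pmf.prob (binomial_pmf n q) \<dots> = measure_pmf.prob (binomial_pmf n q) (A \<inter> {..n})"
    by (simp add: measure_Int_set_pmf)
  also have "\<dots> = (\<Sum>k\<in>A\<inter>{..n}. pmf (binomial_pmf n q) k)"
    by (rule measure_measure_pmf_finite) auto
  finally show ?thesis .
qed

lemma bund_prob:
  assumes "0 \<le> q" "q \<le> 1"
  shows "measure_pmf.prob (sum_iid 3 (bern01 q)) {s. s \<ge> p}
    = (\<Sum>k\<in>{k. p \<le> real k}\<inter>{..3}. pmf (binomial_pmf 3 q) k)"
  using assms by (simp add: sum_iid_bern binom_prob vimage_def)

lemma sing_prob:
  assumes "0 \<le> q" "q \<le> 1" "0 \<le> p"
  shows "p * measure_pmf.prob (bern01 q) {x. x \<ge> p} \<le> q"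
        "p = 1 \<Longrightarrow> p * measure_pmf.prob (bern01 q) {x. x \<ge> p} = q"
proof -
  have e: "measure_pmf.prob (bern01 q) {x. x \<ge> p} =
      measure_pmf.prob (bernoulli_pmf q) {b. p \<le> (if b then 1 else 0)}"
    by (simp add: bern01_def vimage_def)
  consider "p = 0" | "0 < p" "p \<le> 1" | "p > 1" using assms by linarith
  then show "p * measure_pmf.prob (bern01 q) {x. x \<ge> p} \<le> q"
  proof cases
    case 1 then show ?thesis using assms by simp
  next
    case 2
    then have "{b. p \<le> (if b then (1::real) else 0)} = {True}" by auto
    then show ?thesis using 2 assms e
      by (simp add: measure_pmf_single mult_left_le_one_le)
  next
    case 3
    then have "{b. p \<le> (if b then (1::real) else 0)} = {}" by auto
    then show ?thesis using 3 assms e by simp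
  qed
  assume "p = 1"
  then have "{b. p \<le> (if b then (1::real) else 0)} = {True}" by auto
  then show "p * measure_pmf.prob (bern01 q) {x. x \<ge> p} = q"
    using \<open>p = 1\<close> assms e by (simp add: measure_pmf_single)
qed

lemma srev_val:
  assumes "0 \<le> q" "q \<le> 1"
  shows "SRev 3 (bern01 q) = 3 * q"
proof -
  let ?f = "\<lambda>p. p * measure_pmf.prob (bern01 q) {x. x \<ge> p}"
  have bdd: "bdd_above (?f ` {0..})"
    using sing_prob(1)[OF assms] by (auto intro!: bdd_aboveI)
  have "(SUP p\<in>{0..}. ?f p) = q"
  proof (rule antisym)
    show "(SUP p\<in>{0..}. ?f p) \<le> q"
      by (rule cSUP_least) (auto intro: sing_prob(1)[OF assms])
    have "q = ?f 1" using sing_prob(2)[OF assms, of 1] by simp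
    also have "\<dots> \<le> (SUP p\<in>{0..}. ?f p)"
      by (rule cSUP_upper[OF _ bdd]) auto
    finally show "q \<le> (SUP p\<in>{0..}. ?f p)" .
  qed
  then show ?thesis by (simp add: SRev_def)
qed

lemma brev_lower:
  assumes "0 \<le> q" "q \<le> 1"
  shows "BRev 3 (bern01 q) \<ge> 1 - (1 - q)^3"
        "BRev 3 (bern01 q) \<ge> 6*q^2 - 4*q^3"
proof -
  let ?f = "\<lambda>p. p * measure_pmf.prob (sum_iid 3 (bern01 q)) {s. s \<ge> p}"
  have pm: "measure_pmf.prob (sum_iid 3 (bern01 q)) A \<le> 1" for A
    by simp
  have b3: "?f p \<le> 3" if "p \<ge> 0" for p
  proof (cases "p \<le> 3")
    case True
    have "?f p \<le> p * 1" using pm[of "{s. s \<ge> p}"] that by (intro mult_left_mono) auto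
    then show ?thesis using True by simp
  next
    case False
    then have "{k. p \<le> real k} \<inter> {..3} = {}" by auto
    then show ?thesis using bund_prob[OF assms, of p] by simp
  qed
  have bdd: "bdd_above (?f ` {0..})" using b3 by (auto intro!: bdd_aboveI)
  have p1: "pmf (binomial_pmf 3 q) 1 = 3*q*(1-q)^2" using assms
    by (simp add: pmf_binomial numeral_eq_Suc)
  have p2: "pmf (binomial_pmf 3 q) 2 = 3*q^2*(1-q)" using assms
    by (simp add: pmf_binomial numeral_eq_Suc)
  have p3: "pmf (binomial_pmf 3 q) 3 = q^3" using assms
    by (simp add: pmf_binomial)
  have s1: "{k. 1 \<le> real k} \<inter> {..3::nat} = {1,2,3}" by auto
  have s2: "{k. 2 \<le> real k} \<inter> {..3::nat} = {2,3}" by auto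
  have e1: "?f 1 = 1 - (1 - q)^3"
    using bund_prob[OF assms, of 1] s1 p1 p2 p3 by (simp add: power2_eq_square power3_eq_cube algebra_simps)
  have l1: "?f 1 \<le> BRev 3 (bern01 q)"
    unfolding BRev_def by (rule cSUP_upper[OF _ bdd]) auto
  from e1 l1 show "BRev 3 (bern01 q) \<ge> 1 - (1 - q)^3" by linarith
  have e2: "?f 2 = 6*q^2 - 4*q^3"
    using bund_prob[OF assms, of 2] s2 p2 p3 by (simp add: power2_eq_square power3_eq_cube algebra_simps)
  have l2: "?f 2 \<le> BRev 3 (bern01 q)"
    unfolding BRev_def by (rule cSUP_upper[OF _ bdd]) auto
  from e2 l2 show "BRev 3 (bern01 q) \<ge> 6*q^2 - 4*q^3" by linarith
qed

theorem lemma3: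
  fixes c :: real
  assumes "0 < c" and "c \<le> 3"
  shows "BRev 3 (bern01 (c / 3)) / SRev 3 (bern01 (c / 3)) > 0.6"
proof -
  define q where "q = c / 3"
  have q: "0 < q" "q \<le> 1" using assms by (auto simp: q_def)
  have S: "SRev 3 (bern01 q) = 3 * q" using srev_val q by simp
  have "BRev 3 (bern01 q) > 1.8 * q"
  proof (cases "q \<le> 9/20")
    case True
    have "0 \<le> (9 - 20*q) * (5 - 2*q)" using True q by (intro mult_nonneg_nonneg) auto
    moreover have "(9 - 20*q) * (5 - 2*q) = 40*q^2 - 118*q + 45"
      by (simp add: power2_eq_square algebra_simps)
    ultimately have "1.2 - 3*q + q^2 > 0" using True by linarith
    then have "q * (1.2 - 3*q + q^2) > 0" using q by simp
    then have "1 - (1 - q)^3 > 1.8 * q"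
      by (simp add: power2_eq_square power3_eq_cube algebra_simps)
    then show ?thesis using brev_lower(1)[of q] q by linarith
  next
    case False
    have "0 \<le> (20*q - 9) * (21 - 20*q)" using False q by (intro mult_nonneg_nonneg) auto
    moreover have "(20*q - 9) * (21 - 20*q) = 600*q - 400*q^2 - 189"
      by (simp add: power2_eq_square algebra_simps)
    ultimately have "6 * q - 4 * q^2 > 1.8" by linarith
    then have "q * (6 * q - 4 * q^2) > q * 1.8" using q by simp
    then have "6*q^2 - 4*q^3 > 1.8 * q"
      by (simp add: power2_eq_square power3_eq_cube algebra_simps)
    then show ?thesis using brev_lower(2)[of q] q by linarith
  qed
  then show ?thesis using S q unfolding q_def[symmetric]
    by (simp add: less_divide_eq)
qed

end
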